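(* $C(X)_\mathcal{P}$ is a clean ring if and only if it is an almost clean ring.
   Context: Let $(X,\tau)$ be a $T_1$ topological space and $\mathcal{P}$ an ideal of closed subsets of $X$ (a nonempty family of closed sets closed under finite unions and under taking closed subsets). For $f\colon X\to\mathbb{R}$, $D_f$ denotes the set of points of discontinuity of $f$, and $C(X)_\mathcal{P}=\{f\colon X\to\mathbb{R} : \overline{D_f}\in\mathcal{P}\}$, a commutative ring with unity under pointwise operations. A ring is clean if every element is the sum of a unit and an idempotent, and almost clean if every element is the sum of a regular element (a non-zero-divisor) and an idempotent. *)

theory Defs
  imports "HOL-Analysis.Analysis" "HOL-Algebra.Ring"
begin

definition discont_points :: "'a topology \<Rightarrow> ('a \<Rightarrow> real) \<Rightarrow> 'a set" where
  "discont_points X f = {x \<in> topspace X. \<not> limitin euclideanreal f (f x) (atin X x)}"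

definition closed_ideal :: "'a topology \<Rightarrow> 'a set set \<Rightarrow> bool" where
  "closed_ideal X P \<longleftrightarrow> P \<noteq> {} \<and> (\<forall>A\<in>P. closedin X A)
     \<and> (\<forall>A\<in>P. \<forall>B\<in>P. A \<union> B \<in> P)
     \<and> (\<forall>A\<in>P. \<forall>B. closedin X B \<and> B \<subseteq> A \<longrightarrow> B \<in> P)"

text \<open>Functions X \<rightarrow> R are represented extensionally (value 0 off topspace X).\<close>
definition CP :: "'a topology \<Rightarrow> 'a set set \<Rightarrow> ('a \<Rightarrow> real) set" where
  "CP X P = {f. (\<forall>x. x \<notin> topspace X \<longrightarrow> f x = 0) \<and> X closure_of (discont_points X f) \<in> P}"

definition CP_ring :: "'a topology \<Rightarrow> 'a set set \<Rightarrow> ('a \<Rightarrow> real) ring" where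
  "CP_ring X P = \<lparr>carrier = CP X P,
      monoid.mult = (\<lambda>f g x. f x * g x),
      one = (\<lambda>x. if x \<in> topspace X then 1 else 0),
      zero = (\<lambda>x. 0),
      add = (\<lambda>f g x. f x + g x)\<rparr>"

definition clean_ring :: "('b, 'm) ring_scheme \<Rightarrow> bool" where
  "clean_ring R \<longleftrightarrow> (\<forall>a\<in>carrier R. \<exists>u\<in>Units R. \<exists>e\<in>carrier R.
      e \<otimes>\<^bsub>R\<^esub> e = e \<and> a = u \<oplus>\<^bsub>R\<^esub> e)"

definition regular_elem :: "('b, 'm) ring_scheme \<Rightarrow> 'b \<Rightarrow> bool" where
  "regular_elem R r \<longleftrightarrow> r \<in> carrier R \<and>
     (\<forall>s\<in>carrier R. (r \<otimes>\<^bsub>R\<^esub> s = \<zero>\<^bsub>R\<^esub> \<or> s \<otimes>\<^bsub>R\<^esub> r = \<zero>\<^bsub>R\<^esub>) \<longrightarrow> s = \<zero>\<^bsub>R\<^esub>)"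

definition almost_clean_ring :: "('b, 'm) ring_scheme \<Rightarrow> bool" where
  "almost_clean_ring R \<longleftrightarrow> (\<forall>a\<in>carrier R. \<exists>r. regular_elem R r \<and> (\<exists>e\<in>carrier R.
      e \<otimes>\<^bsub>R\<^esub> e = e \<and> a = r \<oplus>\<^bsub>R\<^esub> e))"

end

theory Submission
  imports Defs
begin

lemma ev_top: "eventually (\<lambda>y. y \<in> topspace X) (atin X x)"
  unfolding eventually_atin by (cases "x \<in> topspace X") (auto intro!: exI[of _ "topspace X"])

lemma CP_closure_in:
  assumes "closed_ideal X P" "X closure_of A \<in> P" "X closure_of B \<in> P"
    "C \<subseteq> A \<union> B"
  shows "X closure_of C \<in> P"
proof -
  have un: "\<forall>A\<in>P. \<forall>B\<in>P. A \<union> B \<in> P"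
    using assms(1) unfolding closed_ideal_def by (elim conjE)
  have sub: "\<forall>A\<in>P. \<forall>B. closedin X B \<and> B \<subseteq> A \<longrightarrow> B \<in> P"
    using assms(1) unfolding closed_ideal_def by (elim conjE)
  have U: "(X closure_of A) \<union> (X closure_of B) \<in> P" using un assms(2,3) by simp
  have "X closure_of C \<subseteq> X closure_of (A \<union> B)" by (rule closure_of_mono[OF assms(4)])
  hence "X closure_of C \<subseteq> (X closure_of A) \<union> (X closure_of B)" by (simp only: closure_of_Un)
  moreover have "closedin X (X closure_of C)" by (rule closedin_closure_of)
  ultimately show ?thesis using sub U by simp
qed

lemma CP_op2:
  fixes op :: "real \<Rightarrow> real \<Rightarrow> real" and f g :: "'a \<Rightarrow> real"
  assumes P: "closed_ideal X P" and f: "f \<in> CP X P" and g: "g \<in> CP X P"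
    and op: "\<And>(F::'a filter) (a::'a\<Rightarrow>real) (b::'a\<Rightarrow>real) la lb. (a \<longlongrightarrow> la) F \<Longrightarrow> (b \<longlongrightarrow> lb) F
              \<Longrightarrow> ((\<lambda>y. op (a y) (b y)) \<longlongrightarrow> op la lb) F"
  shows "(\<lambda>x. if x \<in> topspace X then op (f x) (g x) else 0) \<in> CP X P"
proof -
  let ?h = "\<lambda>x. if x \<in> topspace X then op (f x) (g x) else 0"
  have "discont_points X ?h \<subseteq> discont_points X f \<union> discont_points X g"
  proof
    fix x assume x: "x \<in> discont_points X ?h"
    hence xt: "x \<in> topspace X" unfolding discont_points_def by auto
    show "x \<in> discont_points X f \<union> discont_points X g"
    proof (rule ccontr)
      assume "x \<notin> discont_points X f \<union> discont_points X g"
      hence h1: "(f \<longlongrightarrow> f x) (atin X x)" and h2: "(g \<longlongrightarrow> g x) (atin X x)"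
        using xt unfolding discont_points_def by auto
      have lim: "((\<lambda>y. op (f y) (g y)) \<longlongrightarrow> op (f x) (g x)) (atin X x)" by (rule op[OF h1 h2])
      have ev: "eventually (\<lambda>y. op (f y) (g y) = ?h y) (atin X x)"
        using ev_top[of X x] by eventually_elim auto
      have "(?h \<longlongrightarrow> op (f x) (g x)) (atin X x)" using tendsto_cong[OF ev] lim by (rule iffD1)
      hence "(?h \<longlongrightarrow> ?h x) (atin X x)" using xt by simp
      thus False using x unfolding discont_points_def by auto
    qed
  qed
  note dsub = this
  have "X closure_of (discont_points X ?h) \<in> P"
    by (rule CP_closure_in[OF P _ _ dsub]) (use f g in \<open>simp_all add: CP_def\<close>)
  thus ?thesis unfolding CP_def by simp
qed

lemma CP_inv:
  assumes P: "closed_ideal X P" and u: "u \<in> CP X P" and nz: "\<forall>x\<in>topspace X. u x \<noteq> 0"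
  shows "(\<lambda>x. inverse (u x)) \<in> CP X P"
proof -
  have dsub: "discont_points X (\<lambda>x. inverse (u x)) \<subseteq> discont_points X u \<union> discont_points X u"
  proof
    fix x assume x: "x \<in> discont_points X (\<lambda>x. inverse (u x))"
    hence xt: "x \<in> topspace X" unfolding discont_points_def by auto
    show "x \<in> discont_points X u \<union> discont_points X u"
    proof (rule ccontr)
      assume "x \<notin> discont_points X u \<union> discont_points X u"
      hence "(u \<longlongrightarrow> u x) (atin X x)" using xt unfolding discont_points_def by auto
      hence "((\<lambda>y. inverse (u y)) \<longlongrightarrow> inverse (u x)) (atin X x)"
        using nz xt by (intro tendsto_inverse) auto
      thus False using x unfolding discont_points_def by auto
    qed
  qed
  have "\<forall>x. x \<notin> topspace X \<longrightarrow> inverse (u x) = 0" using u unfolding CP_def by auto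
  moreover have "X closure_of (discont_points X (\<lambda>x. inverse (u x))) \<in> P"
    by (rule CP_closure_in[OF P _ _ dsub]) (use u in \<open>simp_all add: CP_def\<close>)
  ultimately show ?thesis unfolding CP_def by simp
qed

lemma CP_ring_simps:
  "carrier (CP_ring X P) = CP X P"
  "mult (CP_ring X P) = (\<lambda>f g x. f x * g x)"
  "one (CP_ring X P) = (\<lambda>x. if x \<in> topspace X then 1 else 0)"
  "zero (CP_ring X P) = (\<lambda>x. 0)"
  "add (CP_ring X P) = (\<lambda>f g x. f x + g x)"
  by (simp_all add: CP_ring_def)

lemma CP_zero: "f \<in> CP X P \<Longrightarrow> x \<notin> topspace X \<Longrightarrow> f x = 0"
  unfolding CP_def by auto

lemma unit_nz:
  assumes "u \<in> Units (CP_ring X P)" "x \<in> topspace X" shows "u x \<noteq> 0"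
proof -
  obtain v where "v \<otimes>\<^bsub>CP_ring X P\<^esub> u = \<one>\<^bsub>CP_ring X P\<^esub>"
    using assms(1) unfolding Units_def by blast
  hence "(\<lambda>y. v y * u y) = (\<lambda>x. if x \<in> topspace X then 1 else 0)"
    by (simp only: CP_ring_simps)
  hence "v x * u x = (if x \<in> topspace X then 1 else 0)" by (rule fun_cong)
  hence "v x * u x = 1" using assms(2) by simp
  thus ?thesis by auto
qed

lemma unit_regular:
  assumes U: "u \<in> Units (CP_ring X P)" shows "regular_elem (CP_ring X P) u"
  unfolding regular_elem_def
proof (intro conjI ballI impI)
  show "u \<in> carrier (CP_ring X P)" using U unfolding Units_def by blast
  fix s assume s: "s \<in> carrier (CP_ring X P)"
    and h: "u \<otimes>\<^bsub>CP_ring X P\<^esub> s = \<zero>\<^bsub>CP_ring X P\<^esub> \<or> s \<otimes>\<^bsub>CP_ring X P\<^esub> u = \<zero>\<^bsub>CP_ring X P\<^esub>"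
  have us: "u x * s x = 0" for x
  proof -
    from h have "(\<lambda>y. u y * s y) = (\<lambda>y. 0) \<or> (\<lambda>y. s y * u y) = (\<lambda>y. 0)"
      by (simp only: CP_ring_simps)
    thus ?thesis by (metis mult.commute)
  qed
  have sC: "s \<in> CP X P" using s by (simp only: CP_ring_simps)
  have "s x = 0" for x
  proof (cases "x \<in> topspace X")
    case True thus ?thesis using unit_nz[OF U True] us[of x] by simp
  next
    case False thus ?thesis using CP_zero[OF sC] by simp
  qed
  thus "s = \<zero>\<^bsub>CP_ring X P\<^esub>" by (simp add: CP_ring_simps fun_eq_iff)
qed

lemma nz_unit:
  assumes P: "closed_ideal X P" and u: "u \<in> CP X P" and nz: "\<forall>x\<in>topspace X. u x \<noteq> 0"
  shows "u \<in> Units (CP_ring X P)"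
  unfolding Units_def
proof (simp add: CP_ring_simps u, intro bexI)
  show "(\<lambda>x. inverse (u x)) \<in> CP X P" by (rule CP_inv[OF P u nz])
  show "(\<lambda>x. inverse (u x) * u x) = (\<lambda>x. if x \<in> topspace X then 1 else 0) \<and>
        (\<lambda>x. u x * inverse (u x)) = (\<lambda>x. if x \<in> topspace X then 1 else 0)"
    using nz CP_zero[OF u] by (auto simp: fun_eq_iff)
qed

theorem theorem3p12:
  fixes X :: "'a topology" and P :: "'a set set"
  assumes "t1_space X" and "closed_ideal X P"
  shows "clean_ring (CP_ring X P) \<longleftrightarrow> almost_clean_ring (CP_ring X P)"
proof
  assume "clean_ring (CP_ring X P)"
  thus "almost_clean_ring (CP_ring X P)"
    unfolding clean_ring_def almost_clean_ring_def using unit_regular by blast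
next
  note P = assms(2)
  assume ac: "almost_clean_ring (CP_ring X P)"
  show "clean_ring (CP_ring X P)"
    unfolding clean_ring_def
  proof
    fix a assume "a \<in> carrier (CP_ring X P)"
    hence a: "a \<in> CP X P" by (simp add: CP_ring_simps)
    define b where "b = (\<lambda>x. if x \<in> topspace X then max 0 (min 1 (3 * a x - 1)) else (0::real))"
    have bC: "b \<in> CP X P" unfolding b_def
      by (rule CP_op2[OF P a a, where op = "\<lambda>p q. max 0 (min 1 (3 * p - 1))"])
         (intro tendsto_intros)
    then obtain r e where r: "regular_elem (CP_ring X P) r" and eC: "e \<in> CP X P"
      and ee: "(\<lambda>x. e x * e x) = e" and br: "b = (\<lambda>x. r x + e x)"
    proof -
      have "b \<in> carrier (CP_ring X P)" using bC by (simp add: CP_ring_simps)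
      then obtain r where r: "regular_elem (CP_ring X P) r" and
        "\<exists>e\<in>carrier (CP_ring X P). e \<otimes>\<^bsub>CP_ring X P\<^esub> e = e \<and> b = r \<oplus>\<^bsub>CP_ring X P\<^esub> e"
        using ac unfolding almost_clean_ring_def by blast
      then obtain e where "e \<in> CP X P" "(\<lambda>x. e x * e x) = e" "b = (\<lambda>x. r x + e x)"
        by (auto simp only: CP_ring_simps)
      thus ?thesis using that r by blast
    qed
    have e01: "e x = 0 \<or> e x = 1" for x
    proof -
      have "e x * e x = e x" using ee by (metis (no_types))
      thus ?thesis by (metis mult_cancel_right1 mult_eq_0_iff)
    qed
    have rb: "r x = b x - e x" for x using br by (metis (no_types) add_diff_cancel_right')
    have reg: "\<And>s. s \<in> CP X P \<Longrightarrow> (\<forall>x. r x * s x = 0) \<Longrightarrow> s = (\<lambda>x. 0)"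
    proof -
      fix s assume s: "s \<in> CP X P" "\<forall>x. r x * s x = 0"
      have "r \<otimes>\<^bsub>CP_ring X P\<^esub> s = \<zero>\<^bsub>CP_ring X P\<^esub>"
        using s(2) by (simp add: CP_ring_simps fun_eq_iff)
      moreover have "s \<in> carrier (CP_ring X P)" using s(1) by (simp add: CP_ring_simps)
      ultimately have "s = \<zero>\<^bsub>CP_ring X P\<^esub>" using r unfolding regular_elem_def by blast
      thus "s = (\<lambda>x. 0)" by (simp add: CP_ring_simps)
    qed
    define s where "s = (\<lambda>x. if x \<in> topspace X then max 0 (1/3 - a x) * (1 - e x) else (0::real))"
    have sC: "s \<in> CP X P" unfolding s_def
      by (rule CP_op2[OF P a eC, where op = "\<lambda>p q. max 0 (1/3 - p) * (1 - q)"])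
         (intro tendsto_intros)
    have "\<forall>x. r x * s x = 0"
    proof
      fix x show "r x * s x = 0"
      proof (cases "x \<in> topspace X \<and> a x < 1/3 \<and> e x = 0")
        case True thus ?thesis by (simp add: rb b_def)
      next
        case False thus ?thesis using e01[of x] by (auto simp: s_def)
      qed
    qed
    hence s0: "s = (\<lambda>x. 0)" using reg sC by blast
    have E1: "x \<in> topspace X \<Longrightarrow> a x < 1/3 \<Longrightarrow> e x = 1" for x
      using fun_cong[OF s0, of x] e01[of x] by (auto simp: s_def)
    define t where "t = (\<lambda>x. if x \<in> topspace X then max 0 (a x - 2/3) * e x else (0::real))"
    have tC: "t \<in> CP X P" unfolding t_def
      by (rule CP_op2[OF P a eC, where op = "\<lambda>p q. max 0 (p - 2/3) * q"])
         (intro tendsto_intros)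
    have "\<forall>x. r x * t x = 0"
    proof
      fix x show "r x * t x = 0"
      proof (cases "x \<in> topspace X \<and> a x > 2/3 \<and> e x = 1")
        case True thus ?thesis by (simp add: rb b_def)
      next
        case False thus ?thesis using e01[of x] by (auto simp: t_def)
      qed
    qed
    hence t0: "t = (\<lambda>x. 0)" using reg tC by blast
    have E0: "x \<in> topspace X \<Longrightarrow> a x > 2/3 \<Longrightarrow> e x = 0" for x
      using fun_cong[OF t0, of x] e01[of x] by (auto simp: t_def)
    define u where "u = (\<lambda>x. a x - e x)"
    have "u = (\<lambda>x. if x \<in> topspace X then a x - e x else 0)"
      using CP_zero[OF a] CP_zero[OF eC] by (auto simp: u_def fun_eq_iff)
    also have "\<dots> \<in> CP X P"
      by (rule CP_op2[OF P a eC, where op = "\<lambda>p q. p - q"]) (intro tendsto_intros)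
    finally have uC: "u \<in> CP X P" .
    have "\<forall>x\<in>topspace X. u x \<noteq> 0"
    proof
      fix x assume x: "x \<in> topspace X"
      show "u x \<noteq> 0"
      proof (cases "e x = 1")
        case True thus ?thesis using E0[OF x] by (auto simp: u_def)
      next
        case False thus ?thesis using E1[OF x] e01[of x] by (auto simp: u_def)
      qed
    qed
    hence uU: "u \<in> Units (CP_ring X P)" using nz_unit[OF P uC] by blast
    show "\<exists>u\<in>Units (CP_ring X P). \<exists>e\<in>carrier (CP_ring X P).
            e \<otimes>\<^bsub>CP_ring X P\<^esub> e = e \<and> a = u \<oplus>\<^bsub>CP_ring X P\<^esub> e"
    proof (rule bexI[OF _ uU], rule bexI[of _ e])
      show "e \<in> carrier (CP_ring X P)" using eC by (simp add: CP_ring_simps)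
      have "a = (\<lambda>x. u x + e x)" by (simp add: u_def)
      thus "e \<otimes>\<^bsub>CP_ring X P\<^esub> e = e \<and> a = u \<oplus>\<^bsub>CP_ring X P\<^esub> e"
        using ee by (simp add: CP_ring_simps)
    qed
  qed
qed

end
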